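(* Consider a finite discrete-time system $x_{k+1} = F(x_k,u_k,\theta,d_k)$ with finite sets $X,U,\Theta,D$, Boolean outputs $\mu_1,\dots,\mu_m : X\to\mathbb{B}$, atomic propositions $\Pi=\{\pi_1,\dots,\pi_m\}$ and observation map $O(x)=\{\pi_i \mid \mu_i(x)=\mathrm{True}\}$. Let $\varphi$ be an LTL formula over $\Pi$, and let $X_0^{\max}\subseteq X$ be the set defined in the context (obtained from the winning region of the Rabin game on the product of the adaptive transition system with the deterministic Rabin automaton of $\varphi$). Then for every initial condition $x_0\in X$ the following are equivalent: (i) there exists a control strategy $\Lambda^* : X^*\times U^*\to U$ such that, for every $\theta\in\Theta$ and every disturbance sequence $d_0d_1\cdots$ with $d_k\in D$, the trajectory $x_{k+1}=F(x_k,u_k,\theta,d_k)$ with $u_k=\Lambda^*(x_0\cdots x_k, u_0\cdots u_{k-1})$ produces a word $O(x_0)O(x_1)\cdots$ satisfying $\varphi$; (ii) $x_0\in X_0^{\max}$.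
   Context: System: $F: X\times U\times\Theta\times D\to X$; the parameter $\theta$ is constant but unknown to the controller, while the disturbance $d$ may vary arbitrarily in $D$ at each step. $2^\Theta_{-\emptyset}$ denotes the set of nonempty subsets of $\Theta$. Parametric transition system (embedding): $\gamma(x,u,\theta)=\{F(x,u,\theta,d)\mid d\in D\}$. Recursive parameter estimator: for $\vartheta\in 2^\Theta_{-\emptyset}$, $x,x'\in X$, $u\in U$, $\Gamma_{rec}(\vartheta,x,u,x')=\{\theta\in\vartheta \mid x'\in\gamma(x,u,\theta)\}$. Adaptive transition system (ATS): states $X^{adp}\subseteq X\times 2^\Theta_{-\emptyset}$ are those reachable from $\{(x,\Theta)\mid x\in X\}$ under the transition function $\gamma^{adp}$, where $(x',\vartheta')\in\gamma^{adp}((x,\vartheta),u)$ iff $x'\in\gamma(x,u,\theta)$ for some $\theta\in\vartheta$ and $\vartheta'=\Gamma_{rec}(\vartheta,x,u,x')$; observation $O^{adp}(x,\vartheta)=O(x)$. Deterministic Rabin automaton (DRA) $\mathcal{R}_\varphi=(S,s^0,2^\Pi,\alpha,\Omega)$ with transition function $\alpha:S\times 2^\Pi\to S$ and pairs $\Omega=\{(F_1,I_1),\dots,(F_r,I_r)\}$, $F_i,I_i\subseteq S$, accepting exactly the words satisfying $\varphi$; a run is accepting if for some $i$ it visits $F_i$ finitely often and $I_i$ infinitely often. Product: states $X^{adp}\times S$, controls $U$, with $((x',\vartheta'),s')$ a successor of $((x,\vartheta),s)$ under $u$ iff $(x',\vartheta')\in\gamma^{adp}((x,\vartheta),u)$ and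 $s'=\alpha(s,O(x))$; Rabin pairs $F_i^P=X^{adp}\times F_i$, $I_i^P=X^{adp}\times I_i$. The Rabin game: the controller chooses $u$, the adversary chooses a successor; the winning region is the set of product states from which the controller has a strategy guaranteeing that every resulting run satisfies the Rabin condition for some pair. Let $X_0^{adp,\max}$ be the set of states $y\in X^{adp}$ such that $(y,s^0)$ lies in the winning region, and $X_0^{\max}=\{x_0\in X\mid (x_0,\Theta)\in X_0^{adp,\max}\}$. *)

theory Defs
  imports Main
begin

datatype 'p ltl =
    LTrue
  | Atom 'p
  | LNot "'p ltl"
  | LAnd "'p ltl" "'p ltl"
  | LNext "'p ltl"
  | LUntil "'p ltl" "'p ltl"

fun ltl_sat_at :: "(nat \<Rightarrow> 'p set) \<Rightarrow> nat \<Rightarrow> 'p ltl \<Rightarrow> bool" where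
  "ltl_sat_at w i LTrue = True"
| "ltl_sat_at w i (Atom p) = (p \<in> w i)"
| "ltl_sat_at w i (LNot f) = (\<not> ltl_sat_at w i f)"
| "ltl_sat_at w i (LAnd f g) = (ltl_sat_at w i f \<and> ltl_sat_at w i g)"
| "ltl_sat_at w i (LNext f) = ltl_sat_at w (Suc i) f"
| "ltl_sat_at w i (LUntil f g) =
     (\<exists>j\<ge>i. ltl_sat_at w j g \<and> (\<forall>k. i \<le> k \<and> k < j \<longrightarrow> ltl_sat_at w k f))"

definition ltl_sat :: "(nat \<Rightarrow> 'p set) \<Rightarrow> 'p ltl \<Rightarrow> bool" where
  "ltl_sat w f = ltl_sat_at w 0 f"

fun dra_run :: "('s \<Rightarrow> 'p set \<Rightarrow> 's) \<Rightarrow> 's \<Rightarrow> (nat \<Rightarrow> 'p set) \<Rightarrow> nat \<Rightarrow> 's" where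
  "dra_run \<alpha> s0 w 0 = s0"
| "dra_run \<alpha> s0 w (Suc k) = \<alpha> (dra_run \<alpha> s0 w k) (w k)"

definition rabin_acc :: "('s set \<times> 's set) list \<Rightarrow> (nat \<Rightarrow> 's) \<Rightarrow> bool" where
  "rabin_acc \<Omega> r = (\<exists>(Fi, Ii) \<in> set \<Omega>. finite {k. r k \<in> Fi} \<and> infinite {k. r k \<in> Ii})"

definition dra_accepts ::
  "('s \<Rightarrow> 'p set \<Rightarrow> 's) \<Rightarrow> 's \<Rightarrow> ('s set \<times> 's set) list \<Rightarrow> (nat \<Rightarrow> 'p set) \<Rightarrow> bool" where
  "dra_accepts \<alpha> s0 \<Omega> w = rabin_acc \<Omega> (dra_run \<alpha> s0 w)"

definition obs :: "('p \<Rightarrow> 'x \<Rightarrow> bool) \<Rightarrow> 'x \<Rightarrow> 'p set" where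
  "obs \<mu> x = {p. \<mu> p x}"

definition gamma :: "('x \<Rightarrow> 'u \<Rightarrow> 'th \<Rightarrow> 'd \<Rightarrow> 'x) \<Rightarrow> 'x \<Rightarrow> 'u \<Rightarrow> 'th \<Rightarrow> 'x set" where
  "gamma F x u \<theta> = {F x u \<theta> d | d. True}"

definition Gamma_rec ::
  "('x \<Rightarrow> 'u \<Rightarrow> 'th \<Rightarrow> 'd \<Rightarrow> 'x) \<Rightarrow> 'th set \<Rightarrow> 'x \<Rightarrow> 'u \<Rightarrow> 'x \<Rightarrow> 'th set" where
  "Gamma_rec F V x u x' = {\<theta> \<in> V. x' \<in> gamma F x u \<theta>}"

definition adp_trans ::
  "('x \<Rightarrow> 'u \<Rightarrow> 'th \<Rightarrow> 'd \<Rightarrow> 'x) \<Rightarrow> ('x \<times> 'th set) \<Rightarrow> 'u \<Rightarrow> ('x \<times> 'th set) set" where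
  "adp_trans F y u =
     {(x', Gamma_rec F (snd y) (fst y) u x') | x'. \<exists>\<theta> \<in> snd y. x' \<in> gamma F (fst y) u \<theta>}"

inductive_set adp_states :: "('x \<Rightarrow> 'u \<Rightarrow> 'th \<Rightarrow> 'd \<Rightarrow> 'x) \<Rightarrow> ('x \<times> 'th set) set"
  for F :: "'x \<Rightarrow> 'u \<Rightarrow> 'th \<Rightarrow> 'd \<Rightarrow> 'x" where
  init: "(x, UNIV) \<in> adp_states F"
| step: "y \<in> adp_states F \<Longrightarrow> y' \<in> adp_trans F y u \<Longrightarrow> y' \<in> adp_states F"

definition prod_succ ::
  "('x \<Rightarrow> 'u \<Rightarrow> 'th \<Rightarrow> 'd \<Rightarrow> 'x) \<Rightarrow> ('p \<Rightarrow> 'x \<Rightarrow> bool) \<Rightarrow> ('s \<Rightarrow> 'p set \<Rightarrow> 's)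
   \<Rightarrow> (('x \<times> 'th set) \<times> 's) \<Rightarrow> 'u \<Rightarrow> (('x \<times> 'th set) \<times> 's) set" where
  "prod_succ F \<mu> \<alpha> q u =
     {(y', \<alpha> (snd q) (obs \<mu> (fst (fst q)))) | y'. y' \<in> adp_trans F (fst q) u}"

text \<open>A play from q0 consistent with a (history-dependent) controller strategy sigma:
  the controller picks u from the history, the adversary picks any successor.\<close>
definition game_play ::
  "('x \<Rightarrow> 'u \<Rightarrow> 'th \<Rightarrow> 'd \<Rightarrow> 'x) \<Rightarrow> ('p \<Rightarrow> 'x \<Rightarrow> bool) \<Rightarrow> ('s \<Rightarrow> 'p set \<Rightarrow> 's)
   \<Rightarrow> ((('x \<times> 'th set) \<times> 's) list \<Rightarrow> 'u) \<Rightarrow> (('x \<times> 'th set) \<times> 's)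
   \<Rightarrow> (nat \<Rightarrow> (('x \<times> 'th set) \<times> 's)) \<Rightarrow> bool" where
  "game_play F \<mu> \<alpha> \<sigma> q0 q =
     (q 0 = q0 \<and> (\<forall>k. q (Suc k) \<in> prod_succ F \<mu> \<alpha> (q k) (\<sigma> (map q [0..<Suc k]))))"

text \<open>Winning region of the Rabin game on the product (pairs X^adp x F_i, X^adp x I_i).\<close>
definition win_region ::
  "('x \<Rightarrow> 'u \<Rightarrow> 'th \<Rightarrow> 'd \<Rightarrow> 'x) \<Rightarrow> ('p \<Rightarrow> 'x \<Rightarrow> bool) \<Rightarrow> ('s \<Rightarrow> 'p set \<Rightarrow> 's)
   \<Rightarrow> ('s set \<times> 's set) list \<Rightarrow> (('x \<times> 'th set) \<times> 's) set" where
  "win_region F \<mu> \<alpha> \<Omega> =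
     {q0. fst q0 \<in> adp_states F \<and>
          (\<exists>\<sigma>. \<forall>q. game_play F \<mu> \<alpha> \<sigma> q0 q \<longrightarrow> rabin_acc \<Omega> (snd \<circ> q))}"

definition X0_max ::
  "('x \<Rightarrow> 'u \<Rightarrow> 'th \<Rightarrow> 'd \<Rightarrow> 'x) \<Rightarrow> ('p \<Rightarrow> 'x \<Rightarrow> bool) \<Rightarrow> ('s \<Rightarrow> 'p set \<Rightarrow> 's)
   \<Rightarrow> 's \<Rightarrow> ('s set \<times> 's set) list \<Rightarrow> 'x set" where
  "X0_max F \<mu> \<alpha> s0 \<Omega> = {x0. ((x0, UNIV), s0) \<in> win_region F \<mu> \<alpha> \<Omega>}"

definition closed_loop ::
  "('x \<Rightarrow> 'u \<Rightarrow> 'th \<Rightarrow> 'd \<Rightarrow> 'x) \<Rightarrow> ('x list \<Rightarrow> 'u list \<Rightarrow> 'u) \<Rightarrow> 'th \<Rightarrow> (nat \<Rightarrow> 'd)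
   \<Rightarrow> 'x \<Rightarrow> (nat \<Rightarrow> 'x) \<Rightarrow> (nat \<Rightarrow> 'u) \<Rightarrow> bool" where
  "closed_loop F \<Lambda> \<theta> d x0 x u =
     (x 0 = x0 \<and>
      (\<forall>k. u k = \<Lambda> (map x [0..<Suc k]) (map u [0..<k]) \<and>
           x (Suc k) = F (x k) (u k) \<theta> (d k)))"

end

theory Submission
  imports Defs
begin

fun ul :: "('x list \<Rightarrow> 'u list \<Rightarrow> 'u) \<Rightarrow> 'x list \<Rightarrow> nat \<Rightarrow> 'u list" where
  "ul L xs 0 = []"
| "ul L xs (Suc k) = ul L xs k @ [L (take (Suc k) xs) (ul L xs k)]"

lemma ul_take: "i \<le> j \<Longrightarrow> take j xs = take j ys \<Longrightarrow> ul L xs i = ul L ys i"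
proof (induction i)
  case 0 then show ?case by simp
next
  case (Suc i)
  have "take (Suc i) xs = take (Suc i) (take j xs)" using Suc.prems by (metis min.absorb1 take_take)
  also have "\<dots> = take (Suc i) (take j ys)" using Suc.prems by simp
  also have "\<dots> = take (Suc i) ys" using Suc.prems by (metis min.absorb1 take_take)
  finally show ?case using Suc by simp
qed

definition sig_of :: "('x list \<Rightarrow> 'u list \<Rightarrow> 'u) \<Rightarrow> (('x \<times> 'th set) \<times> 's) list \<Rightarrow> 'u" where
  "sig_of L hist = (let xs = map (fst \<circ> fst) hist in L xs (ul L xs (length xs - 1)))"

lemma ul_map: "ul L (map x [0..<Suc k]) k = map (\<lambda>j. L (map x [0..<Suc j]) (ul L (map x [0..<Suc j]) j)) [0..<k]"
proof (induction k)
  case 0 then show ?case by simp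
next
  case (Suc k)
  have "ul L (map x [0..<Suc (Suc k)]) k = ul L (map x [0..<Suc k]) k"
    by (rule ul_take) (auto simp: take_map)
  moreover have "take (Suc k) (map x [0..<Suc (Suc k)]) = map x [0..<Suc k]"
    by (simp add: take_map)
  ultimately show ?case using Suc by simp
qed

lemma dra_run_cong: "(\<And>i. i < k \<Longrightarrow> w i = w' i) \<Longrightarrow> dra_run a s w k = dra_run a s w' k"
  by (induction k) auto

fun Vf :: "('x \<Rightarrow> 'u \<Rightarrow> 'th \<Rightarrow> 'd \<Rightarrow> 'x) \<Rightarrow> 'x list \<Rightarrow> 'u list \<Rightarrow> nat \<Rightarrow> 'th set" where
  "Vf F xs us 0 = UNIV"
| "Vf F xs us (Suc k) = Gamma_rec F (Vf F xs us k) (xs!k) (us!k) (xs!Suc k)"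

definition Lam_of where
  "Lam_of F \<mu> a s0 \<sigma> xs us = \<sigma> (map (\<lambda>k. ((xs!k, Vf F xs us k), dra_run a s0 (\<lambda>i. obs \<mu> (xs!i)) k)) [0..<length xs])"

lemma Vf_eq:
  assumes "\<And>i. i \<le> n \<Longrightarrow> xs!i = x i" "\<And>i. i < n \<Longrightarrow> us!i = u i"
    and "V 0 = UNIV" "\<And>k. V (Suc k) = Gamma_rec F (V k) (x k) (u k) (x (Suc k))"
  shows "k \<le> n \<Longrightarrow> Vf F xs us k = V k"
  by (induction k) (auto simp: assms)

lemma chain_inter:
  fixes V :: "nat \<Rightarrow> 'th::finite set"
  assumes ne: "\<And>k. V k \<noteq> {}" and dec: "\<And>k. V (Suc k) \<subseteq> V k"
  shows "\<exists>\<theta>. \<forall>k. \<theta> \<in> V k"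
proof -
  have mono: "\<And>i j. i \<le> j \<Longrightarrow> V j \<subseteq> V i"
  proof -
    fix i j :: nat assume "i \<le> j"
    then show "V j \<subseteq> V i"
      by (induction j rule: dec_induct) (use dec in blast)+
  qed
  obtain k where k: "\<forall>j. card (V k) \<le> card (V j)"
    using ex_has_least_nat[of "\<lambda>_. True" 0 "\<lambda>j. card (V j)"] by blast
  obtain \<theta> where th: "\<theta> \<in> V k" using ne by blast
  have "\<theta> \<in> V j" for j
  proof (cases "j \<le> k")
    case True then show ?thesis using mono th by blast
  next
    case False
    then have "V j \<subseteq> V k" using mono by simp
    moreover have "card (V k) \<le> card (V j)" using k by blast
    ultimately have "V j = V k" by (intro card_seteq) auto
    then show ?thesis using th by simp
  qed
  then show ?thesis by blast
qed

theorem mainTheorem3: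
  fixes F :: "'x::finite \<Rightarrow> 'u::finite \<Rightarrow> 'th::finite \<Rightarrow> 'd::finite \<Rightarrow> 'x"
    and \<mu> :: "'p::finite \<Rightarrow> 'x \<Rightarrow> bool"
    and \<phi> :: "'p ltl"
    and \<alpha> :: "'s::finite \<Rightarrow> 'p set \<Rightarrow> 's"
    and s0 :: 's
    and \<Omega> :: "('s set \<times> 's set) list"
    and x0 :: 'x
  assumes dra: "\<And>w. dra_accepts \<alpha> s0 \<Omega> w \<longleftrightarrow> ltl_sat w \<phi>"
  shows "(\<exists>\<Lambda> :: 'x list \<Rightarrow> 'u list \<Rightarrow> 'u. \<forall>\<theta> d x u.
            closed_loop F \<Lambda> \<theta> d x0 x u \<longrightarrow> ltl_sat (\<lambda>k. obs \<mu> (x k)) \<phi>)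
         \<longleftrightarrow> x0 \<in> X0_max F \<mu> \<alpha> s0 \<Omega>"
proof
  assume "\<exists>\<Lambda> :: 'x list \<Rightarrow> 'u list \<Rightarrow> 'u. \<forall>\<theta> d x u.
            closed_loop F \<Lambda> \<theta> d x0 x u \<longrightarrow> ltl_sat (\<lambda>k. obs \<mu> (x k)) \<phi>"
  then obtain L :: "'x list \<Rightarrow> 'u list \<Rightarrow> 'u" where L: "\<And>\<theta> d x u.
            closed_loop F L \<theta> d x0 x u \<Longrightarrow> ltl_sat (\<lambda>k. obs \<mu> (x k)) \<phi>" by blast
  define \<sigma> :: "(('x \<times> 'th set) \<times> 's) list \<Rightarrow> 'u" where "\<sigma> = sig_of L"
  have "\<forall>q. game_play F \<mu> \<alpha> \<sigma> ((x0, UNIV), s0) q \<longrightarrow> rabin_acc \<Omega> (snd \<circ> q)"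
  proof (intro allI impI)
    fix q assume gp: "game_play F \<mu> \<alpha> \<sigma> ((x0, UNIV), s0) q"
    define x where "x k = fst (fst (q k))" for k
    define V where "V k = snd (fst (q k))" for k
    define u where "u k = \<sigma> (map q [0..<Suc k])" for k
    have q0: "q 0 = ((x0, UNIV), s0)" using gp by (simp add: game_play_def)
    have step: "q (Suc k) \<in> prod_succ F \<mu> \<alpha> (q k) (u k)" for k
      using gp by (simp add: game_play_def u_def)
    have trans: "(x (Suc k), V (Suc k)) \<in> adp_trans F (x k, V k) (u k)"
      and sk: "snd (q (Suc k)) = \<alpha> (snd (q k)) (obs \<mu> (x k))" for k
      using step[of k] by (auto simp: prod_succ_def x_def V_def)
    have Vs: "V (Suc k) = Gamma_rec F (V k) (x k) (u k) (x (Suc k))"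
      and ex: "\<exists>\<theta>\<in>V k. x (Suc k) \<in> gamma F (x k) (u k) \<theta>" for k
      using trans[of k] by (auto simp: adp_trans_def)
    have ne: "V k \<noteq> {}" for k
    proof (cases k)
      case 0 then show ?thesis using q0 by (simp add: V_def)
    next
      case (Suc j) then show ?thesis using ex[of j] Vs[of j] by (auto simp: Gamma_rec_def)
    qed
    have dec: "V (Suc k) \<subseteq> V k" for k using Vs[of k] by (auto simp: Gamma_rec_def)
    obtain \<theta> where th: "\<And>k. \<theta> \<in> V k" using chain_inter[of V, OF ne dec] by blast
    have "x (Suc k) \<in> gamma F (x k) (u k) \<theta>" for k
      using th[of "Suc k"] Vs[of k] by (simp add: Gamma_rec_def)
    then have "\<exists>dd. x (Suc k) = F (x k) (u k) \<theta> dd" for k by (auto simp: gamma_def)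
    then obtain d where d: "\<And>k. x (Suc k) = F (x k) (u k) \<theta> (d k)" by metis
    have uk: "u k = L (map x [0..<Suc k]) (map u [0..<k])" for k
    proof -
      have mq: "map (fst \<circ> fst) (map q [0..<Suc j]) = map x [0..<Suc j]" for j
        by (simp add: x_def)
      have ueq: "u j = L (map x [0..<Suc j]) (ul L (map x [0..<Suc j]) j)" for j
        unfolding u_def \<sigma>_def sig_of_def Let_def mq by simp
      have "ul L (map x [0..<Suc k]) k = map u [0..<k]"
        by (subst ul_map, intro map_cong refl) (simp only: ueq)
      then show ?thesis using ueq[of k] by simp
    qed
    have "closed_loop F L \<theta> d x0 x u"
      unfolding closed_loop_def using q0 uk d by (simp add: x_def)
    then have "ltl_sat (\<lambda>k. obs \<mu> (x k)) \<phi>" by (rule L)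
    then have "dra_accepts \<alpha> s0 \<Omega> (\<lambda>k. obs \<mu> (x k))" using dra by blast
    moreover have "(snd \<circ> q) k = dra_run \<alpha> s0 (\<lambda>k. obs \<mu> (x k)) k" for k
      by (induction k) (auto simp: q0 sk)
    ultimately show "rabin_acc \<Omega> (snd \<circ> q)"
      unfolding dra_accepts_def by (metis ext)
  qed
  then show "x0 \<in> X0_max F \<mu> \<alpha> s0 \<Omega>"
    unfolding X0_max_def win_region_def by (auto intro: adp_states.init)
next
  assume "x0 \<in> X0_max F \<mu> \<alpha> s0 \<Omega>"
  then obtain \<sigma> where sg: "\<And>q. game_play F \<mu> \<alpha> \<sigma> ((x0, UNIV), s0) q \<Longrightarrow> rabin_acc \<Omega> (snd \<circ> q)"
    unfolding X0_max_def win_region_def by auto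
  define L where "L = Lam_of F \<mu> \<alpha> s0 \<sigma>"
  have "\<forall>\<theta> d x u. closed_loop F L \<theta> d x0 x u \<longrightarrow> ltl_sat (\<lambda>k. obs \<mu> (x k)) \<phi>"
  proof (intro allI impI)
    fix \<theta> d x u assume cl: "closed_loop F L \<theta> d x0 x u"
    have x0: "x 0 = x0" and uk: "\<And>k. u k = L (map x [0..<Suc k]) (map u [0..<k])"
      and xs: "\<And>k. x (Suc k) = F (x k) (u k) \<theta> (d k)"
      using cl by (auto simp: closed_loop_def)
    define V where "V = rec_nat (UNIV::'th set) (\<lambda>k Vk. Gamma_rec F Vk (x k) (u k) (x (Suc k)))"
    have V0: "V 0 = UNIV" and VS: "\<And>k. V (Suc k) = Gamma_rec F (V k) (x k) (u k) (x (Suc k))"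
      by (simp_all add: V_def)
    define s where "s = dra_run \<alpha> s0 (\<lambda>k. obs \<mu> (x k))"
    define q where "q k = ((x k, V k), s k)" for k
    have thV: "\<theta> \<in> V k" for k
      by (induction k) (auto simp: V0 VS Gamma_rec_def gamma_def xs)
    have hist: "L (map x [0..<Suc k]) (map u [0..<k]) = \<sigma> (map q [0..<Suc k])" for k
    proof -
      let ?xs = "map x [0..<Suc k]" and ?us = "map u [0..<k]"
      have "Vf F ?xs ?us i = V i" if "i \<le> k" for i
        by (rule Vf_eq[of k ?xs x ?us u V F]) (use that in \<open>auto simp: V0 VS nth_append\<close>)
      moreover have "dra_run \<alpha> s0 (\<lambda>j. obs \<mu> (?xs!j)) i = s i" if "i \<le> k" for i
        unfolding s_def by (rule dra_run_cong) (use that in \<open>auto simp: nth_append\<close>)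
      ultimately show ?thesis
        unfolding L_def Lam_of_def q_def
        by (intro arg_cong[where f=\<sigma>]) (auto simp: nth_append simp del: upt_Suc)
    qed
    have "game_play F \<mu> \<alpha> \<sigma> ((x0, UNIV), s0) q"
      unfolding game_play_def
    proof (intro conjI allI)
      show "q 0 = ((x0, UNIV), s0)" by (simp add: q_def x0 V0 s_def)
    next
      fix k
      have "\<sigma> (map q [0..<Suc k]) = u k" using hist uk by simp
      moreover have "q (Suc k) \<in> prod_succ F \<mu> \<alpha> (q k) (u k)"
        unfolding prod_succ_def adp_trans_def q_def
        using thV[of k] VS[of k] xs[of k]
        by (auto simp: s_def gamma_def)
      ultimately show "q (Suc k) \<in> prod_succ F \<mu> \<alpha> (q k) (\<sigma> (map q [0..<Suc k]))" by simp
    qed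
    then have "rabin_acc \<Omega> (snd \<circ> q)" by (rule sg)
    moreover have "snd \<circ> q = s" by (auto simp: q_def)
    ultimately have "dra_accepts \<alpha> s0 \<Omega> (\<lambda>k. obs \<mu> (x k))"
      by (simp add: dra_accepts_def s_def)
    then show "ltl_sat (\<lambda>k. obs \<mu> (x k)) \<phi>" using dra by blast
  qed
  then show "\<exists>\<Lambda> :: 'x list \<Rightarrow> 'u list \<Rightarrow> 'u. \<forall>\<theta> d x u.
            closed_loop F \<Lambda> \<theta> d x0 x u \<longrightarrow> ltl_sat (\<lambda>k. obs \<mu> (x k)) \<phi>" by blast
qed

end
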